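(* Let $d\ge2$ and let $\mathbf{p}^\star=(1,p_2^\star,\dots,p_d^\star)\in(0,\infty)^d$ be a maximizer over $\mathbf{p}\in(0,\infty)^d$ of $$\min_{k\in\{1,\dots,d\}}\frac{\prod_{i=1}^d p_i}{D_k(\mathbf{p})^d}.$$ Then $D(\mathbf{p}^\star):=\max_{k\in\{1,\dots,d\}}D_k(\mathbf{p}^\star)=D_1(\mathbf{p}^\star)$.
   Context: For $k\in\{1,\dots,d\}$ let $\mathbf{w}_k\in\mathbb{R}^d$ have entries $w_{k,i}=0$ for $i<k$, $w_{k,k}=k$, $w_{k,i}=i-1$ for $k<i\le d$, and set $D_k(\mathbf{p})=\sqrt{\sum_{i=1}^d w_{k,i}^2p_i^2}$. Thus e.g. $D_1(\mathbf{p})^2=p_1^2+p_2^2+4p_3^2+\dots+(d-1)^2p_d^2$ and $D_d(\mathbf{p})^2=d^2p_d^2$. *)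

theory Defs
  imports Complex_Main
begin

text \<open>Vectors in R^d are functions nat => real, relevant on indices 1..d.\<close>

definition wgt :: "nat \<Rightarrow> nat \<Rightarrow> real" where
  "wgt k i = (if i < k then 0 else if i = k then real k else real i - 1)"

definition Dk :: "nat \<Rightarrow> nat \<Rightarrow> (nat \<Rightarrow> real) \<Rightarrow> real" where
  "Dk d k p = sqrt (\<Sum>i=1..d. (wgt k i)^2 * (p i)^2)"

definition objective :: "nat \<Rightarrow> (nat \<Rightarrow> real) \<Rightarrow> real" where
  "objective d p = Min ((\<lambda>k. (\<Prod>i=1..d. p i) / (Dk d k p) ^ d) ` {1..d})"

definition Dmax :: "nat \<Rightarrow> (nat \<Rightarrow> real) \<Rightarrow> real" where
  "Dmax d p = Max ((\<lambda>k. Dk d k p) ` {1..d})"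

end

theory Submission
  imports Defs
begin

lemma Dk_pos:
  assumes "k \<in> {1..d}" "p k > 0"
  shows "Dk d k p > 0"
proof -
  have "(wgt k k)^2 * (p k)^2 \<le> (\<Sum>i=1..d. (wgt k i)^2 * (p i)^2)"
    by (rule member_le_sum) (use assms in auto)
  moreover have "(wgt k k)^2 * (p k)^2 > 0" using assms by (auto simp: wgt_def numeral_2_eq_2)
  ultimately show ?thesis unfolding Dk_def by simp
qed

theorem lemma4:
  fixes d :: nat and pstar :: "nat \<Rightarrow> real"
  assumes "d \<ge> 2"
    and "pstar 1 = 1"
    and "\<forall>i\<in>{1..d}. pstar i > 0"
    and "\<forall>p :: nat \<Rightarrow> real. (\<forall>i\<in>{1..d}. p i > 0) \<longrightarrow> objective d p \<le> objective d pstar"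
  shows "Dmax d pstar = Dk d 1 pstar"
proof (rule ccontr)
  assume ne: "Dmax d pstar \<noteq> Dk d 1 pstar"
  define M where "M = Dmax d pstar"
  define D1 where "D1 = Dk d 1 pstar"
  have fin: "finite ((\<lambda>k. Dk d k pstar) ` {1..d})" by simp
  have D1le: "D1 \<le> M" unfolding M_def D1_def Dmax_def
    by (rule Max_ge) (use assms(1) in auto)
  hence D1M: "D1 < M" using ne M_def D1_def by auto
  have "M \<in> (\<lambda>k. Dk d k pstar) ` {1..d}" unfolding M_def Dmax_def
    by (rule Max_in) (use assms(1) in auto)
  then obtain k where k: "k \<in> {1..d}" "Dk d k pstar = M" by auto
  have Mpos: "M > 0" using k Dk_pos assms(3) by metis
  have D1pos: "D1 > 0" unfolding D1_def using Dk_pos assms(1,3) by simp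
  have Mge: "\<And>j. j \<in> {1..d} \<Longrightarrow> Dk d j pstar \<le> M" unfolding M_def Dmax_def
    by (rule Max_ge) auto
  define a where "a = sqrt (1 + M^2 - D1^2)"
  have "D1^2 < M^2" using D1M D1pos by (simp add: power_strict_mono)
  hence a1: "a > 1" unfolding a_def by (simp add: real_less_rsqrt)
  have asq: "a^2 = 1 + M^2 - D1^2" unfolding a_def using \<open>D1^2 < M^2\<close> D1pos
    by simp
  define q where "q = pstar(1 := a)"
  have qpos: "\<forall>i\<in>{1..d}. q i > 0" using assms(3) a1 unfolding q_def by auto
  have Dj: "Dk d j q = Dk d j pstar" if "j \<ge> 2" for j
    unfolding Dk_def
    by (rule arg_cong[where f=sqrt], rule sum.cong) (use that in \<open>auto simp: q_def wgt_def\<close>)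
  have S: "(\<Sum>i=1..d. (wgt 1 i)^2 * (q i)^2) = a^2 + (\<Sum>i=2..d. (wgt 1 i)^2 * (pstar i)^2)"
    using assms(1) by (subst sum.atLeast_Suc_atMost) (auto simp: q_def wgt_def numeral_2_eq_2 intro!: sum.cong)
  have S': "(\<Sum>i=1..d. (wgt 1 i)^2 * (pstar i)^2) = 1 + (\<Sum>i=2..d. (wgt 1 i)^2 * (pstar i)^2)"
    using assms(1,2) by (subst sum.atLeast_Suc_atMost) (auto simp: wgt_def numeral_2_eq_2)
  have nn: "0 \<le> (\<Sum>i=1..d. (wgt 1 i)^2 * (pstar i)^2)" by (rule sum_nonneg) auto
  have "D1^2 = (\<Sum>i=1..d. (wgt 1 i)^2 * (pstar i)^2)" unfolding D1_def Dk_def using nn by simp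
  hence "(\<Sum>i=1..d. (wgt 1 i)^2 * (q i)^2) = M^2" using S S' asq by simp
  hence Dq1: "Dk d 1 q = M" unfolding Dk_def using Mpos by simp
  have Pq: "(\<Prod>i=1..d. q i) = a * (\<Prod>i=1..d. pstar i)"
  proof -
    have "(\<Prod>i=1..d. q i) = a * (\<Prod>i=2..d. q i)" using assms(1)
      by (subst prod.atLeast_Suc_atMost) (auto simp: q_def numeral_2_eq_2)
    also have "(\<Prod>i=2..d. q i) = (\<Prod>i=2..d. pstar i)" by (rule prod.cong) (auto simp: q_def)
    also have "(\<Prod>i=2..d. pstar i) = (\<Prod>i=1..d. pstar i)" using assms(1,2)
      by (subst (2) prod.atLeast_Suc_atMost) (auto simp: numeral_2_eq_2)
    finally show ?thesis .
  qed
  define P where "P = (\<Prod>i=1..d. pstar i)"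
  have Ppos: "P > 0" unfolding P_def using assms(3) by (intro prod_pos) auto
  have "objective d pstar \<le> P / M^d" unfolding objective_def P_def
    using k by (intro Min_le) (auto simp: image_iff intro!: bexI[of _ k])
  moreover have "objective d q \<ge> a * P / M^d" unfolding objective_def
  proof (subst Min_ge_iff, simp, use assms(1) in simp, intro ballI)
    fix x assume "x \<in> (\<lambda>k. (\<Prod>i=1..d. q i) / (Dk d k q) ^ d) ` {1..d}"
    then obtain j where j: "j \<in> {1..d}" "x = (\<Prod>i=1..d. q i) / (Dk d j q) ^ d" by auto
    have Djle: "Dk d j q \<le> M"
      using Dq1 Dj Mge j(1) by (cases "j = 1") auto
    have Djpos: "Dk d j q > 0" using Dk_pos j(1) qpos by auto
    have "(Dk d j q)^d \<le> M^d" using Djle Djpos by (simp add: power_mono)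
    moreover have "(Dk d j q)^d > 0" using Djpos by simp
    moreover have "a * P > 0" using a1 Ppos by simp
    ultimately have "a * P / M^d \<le> a * P / (Dk d j q)^d"
      by (intro divide_left_mono) auto
    thus "a * P / M^d \<le> x" using j Pq P_def by simp
  qed
  moreover have "P / M^d < a * P / M^d" using a1 Ppos Mpos
    by (intro divide_strict_right_mono) auto
  moreover have "objective d q \<le> objective d pstar" using assms(4) qpos by blast
  ultimately show False by linarith
qed

end
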